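(* Let $a<b$ be two $n$-bit integers. Then $\Pr[I(a,b,\vec e_{\mathsf a})]<\frac{8}{b-a}$.
   Context: Bits of $n$-bit integers are indexed $1$ (least significant) to $n$ (most significant). For an energy vector $\vec e=(e_1,\dots,e_n)$, an inexact comparison of $u,v$ reads each bit $j$ of $u$ and of $v$ independently, flipped with probability $2^{-e_j}$, and orders $u,v$ by the read values (the most significant bit at which the read values differ). $I(u,v,\vec e)$ is the event that this comparison gives the wrong order. $\vec e_{\mathsf a}=(1,2,\dots,n)$, i.e. bit $j$ gets energy $j$ and is flipped with probability $2^{-j}$. *)

theory Defs
  imports Complex_Main
begin

text \<open>Bits are indexed 1 (least significant) to n (most significant).
  Bit j of the natural number x.\<close>
definition bit_at :: "nat \<Rightarrow> nat \<Rightarrow> bool" where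
  "bit_at x j = odd (x div 2 ^ (j - 1))"

definition flip_prob :: "(nat \<Rightarrow> real) \<Rightarrow> nat \<Rightarrow> real" where
  "flip_prob e j = 2 powr (- e j)"

definition pattern_prob :: "nat \<Rightarrow> (nat \<Rightarrow> real) \<Rightarrow> nat set \<Rightarrow> real" where
  "pattern_prob n e S =
     (\<Prod>j\<in>{1..n}. if j \<in> S then flip_prob e j else 1 - flip_prob e j)"

definition read_val :: "nat \<Rightarrow> nat \<Rightarrow> nat set \<Rightarrow> nat" where
  "read_val n x S = (\<Sum>j\<in>{1..n}. if bit_at x j \<noteq> (j \<in> S) then 2 ^ (j - 1) else 0)"

text \<open>The inexact comparison of u and v gives the wrong order: it does not
  report the true strict order of u and v (read values equal count as wrong).\<close>
definition wrong_order :: "nat \<Rightarrow> nat \<Rightarrow> nat \<Rightarrow> nat set \<Rightarrow> nat set \<Rightarrow> bool" where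
  "wrong_order n u v S T =
     ((u < v \<and> \<not> read_val n u S < read_val n v T) \<or>
      (v < u \<and> \<not> read_val n v T < read_val n u S))"

definition prob_I :: "nat \<Rightarrow> nat \<Rightarrow> nat \<Rightarrow> (nat \<Rightarrow> real) \<Rightarrow> real" where
  "prob_I n u v e =
     (\<Sum>S\<in>Pow {1..n}. \<Sum>T\<in>Pow {1..n}.
        if wrong_order n u v S T then pattern_prob n e S * pattern_prob n e T else 0)"

definition e_a :: "nat \<Rightarrow> real" where
  "e_a j = real j"

end

theory Submission
  imports Defs
begin

lemma prod_split:
  assumes "finite A" "S \<subseteq> A"
  shows "(\<Prod>i\<in>A. if i \<in> S then f i else g i) = (\<Prod>i\<in>S. f i) * (\<Prod>i\<in>A-S. (g i :: real))"
proof -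
  have 1: "A \<inter> S = S" "A \<inter> - S = A - S" using assms by auto
  show ?thesis using prod.If_cases[of A "\<lambda>i. i \<in> S" f g] assms(1) by (simp only: mem_Collect_eq Collect_mem_eq 1)
qed

lemma total_prob:
  assumes "finite A"
  shows "(\<Sum>S\<in>Pow A. \<Prod>i\<in>A. if i \<in> S then q i else 1 - q i) = (1::real)"
proof -
  have "(\<Sum>S\<in>Pow A. \<Prod>i\<in>A. if i \<in> S then q i else 1 - q i)
      = (\<Sum>S\<in>Pow A. (\<Prod>i\<in>S. q i) * (\<Prod>i\<in>A-S. 1 - q i))"
    by (rule sum.cong) (auto intro: prod_split assms)
  also have "\<dots> = (\<Prod>i\<in>A. q i + (1 - q i))" using prod_add[OF assms] by metis
  finally show ?thesis by simp
qed

lemma marginal: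
  assumes "finite A" "j \<in> A"
  shows "(\<Sum>S\<in>Pow A. if j \<in> S then (\<Prod>i\<in>A. if i \<in> S then q i else 1 - q i) else 0) = (q j::real)"
proof -
  define g where "g i = (if i = j then 0 else 1 - q i)" for i
  have "(\<Sum>S\<in>Pow A. if j \<in> S then (\<Prod>i\<in>A. if i \<in> S then q i else 1 - q i) else 0)
      = (\<Sum>S\<in>Pow A. (\<Prod>i\<in>S. q i) * (\<Prod>i\<in>A-S. g i))"
  proof (rule sum.cong)
    fix S assume S: "S \<in> Pow A"
    show "(if j \<in> S then (\<Prod>i\<in>A. if i \<in> S then q i else 1 - q i) else 0)
      = (\<Prod>i\<in>S. q i) * (\<Prod>i\<in>A-S. g i)"
    proof (cases "j \<in> S")
      case True
      have "(\<Prod>i\<in>A-S. g i) = (\<Prod>i\<in>A-S. 1 - q i)"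
        by (rule prod.cong) (use True in \<open>auto simp: g_def\<close>)
      then show ?thesis using True prod_split[OF assms(1)] S by auto
    next
      case False
      have "(\<Prod>i\<in>A-S. g i) = 0"
        using False assms by (intro prod_zero) (auto simp: g_def intro!: bexI[of _ j])
      then show ?thesis using False by simp
    qed
  qed simp
  also have "\<dots> = (\<Prod>i\<in>A. q i + g i)" using prod_add[OF assms(1)] by metis
  also have "\<dots> = (\<Prod>i\<in>A. if i = j then q j else 1)"
    by (rule prod.cong) (auto simp: g_def)
  also have "\<dots> = q j" using assms by (simp add: prod.delta)
  finally show ?thesis .
qed


lemma bits_sum:
  "x < 2 ^ n \<Longrightarrow> x = (\<Sum>j\<in>{1..n}. if bit_at x j then 2 ^ (j - 1) else (0::nat))"
proof (induction n arbitrary: x)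
  case 0 then show ?case by simp
next
  case (Suc n)
  have h: "x div 2 < 2 ^ n" using Suc.prems by simp
  have "(\<Sum>j\<in>{1..Suc n}. if bit_at x j then 2 ^ (j - 1) else (0::nat))
     = (if bit_at x 1 then 1 else 0) + (\<Sum>j\<in>{Suc 1..Suc n}. if bit_at x j then 2 ^ (j - 1) else 0)"
    by (subst sum.atLeast_Suc_atMost) auto
  also have "(\<Sum>j\<in>{Suc 1..Suc n}. if bit_at x j then 2 ^ (j - 1) else (0::nat))
     = (\<Sum>j\<in>{1..n}. if bit_at x (Suc j) then 2 ^ j else 0)"
    by (subst sum.shift_bounds_cl_Suc_ivl) (rule sum.cong; simp)
  also have "\<dots> = (\<Sum>j\<in>{1..n}. 2 * (if bit_at (x div 2) j then 2 ^ (j - 1) else 0))"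
  proof (rule sum.cong)
    fix j assume "j \<in> {1..n}"
    then obtain i where i: "j = Suc i" by (cases j) auto
    have "x div 2 ^ j = x div 2 div 2 ^ i" using i by (simp add: div_mult2_eq)
    then show "(if bit_at x (Suc j) then 2 ^ j else 0) = 2 * (if bit_at (x div 2) j then 2 ^ (j - 1) else (0::nat))"
      using i by (simp add: bit_at_def)
  qed simp
  also have "\<dots> = 2 * (x div 2)" by (subst sum_distrib_left[symmetric]) (use Suc.IH[OF h] in simp)
  finally show ?case by (simp add: bit_at_def)
qed

lemma read_val_empty: "x < 2 ^ n \<Longrightarrow> read_val n x {} = x"
  unfolding read_val_def using bits_sum[of x n] by simp

lemma term_bound:
  assumes "(c::int) \<ge> 0"
  shows "\<bar>(if b \<noteq> s then c else 0) - (if b then c else 0)\<bar> \<le> (if s then c else 0)"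
  using assms by (cases b; cases s) simp_all

lemma read_err:
  "\<bar>int (read_val n x S) - int (read_val n x {})\<bar> \<le> (\<Sum>j\<in>{1..n}. if j \<in> S then 2 ^ (j - 1) else 0)"
proof -
  have "int (read_val n x S) - int (read_val n x {}) =
     (\<Sum>j\<in>{1..n}. (if bit_at x j \<noteq> (j \<in> S) then 2 ^ (j - 1) else 0) - (if bit_at x j then 2 ^ (j - 1) else (0::int)))"
    unfolding read_val_def of_nat_sum sum_subtractf[symmetric]
    by (rule sum.cong) auto
  also have "\<bar>\<dots>\<bar> \<le> (\<Sum>j\<in>{1..n}. \<bar>(if bit_at x j \<noteq> (j \<in> S) then 2 ^ (j - 1) else 0) - (if bit_at x j then 2 ^ (j - 1) else (0::int))\<bar>)"
    by (rule sum_abs)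
  also have "\<dots> \<le> (\<Sum>j\<in>{1..n}. if j \<in> S then 2 ^ (j - 1) else 0)"
    by (rule sum_mono) (rule term_bound, simp)
  finally show ?thesis .
qed

lemma E_bound: "2 * (\<Sum>j\<in>{1..<k}. (2::int) ^ (j - 1)) + 1 \<le> 2 ^ k"
proof (induction k)
  case 0 then show ?case by simp
next
  case (Suc k)
  show ?case
  proof (cases k)
    case 0 then show ?thesis by simp
  next
    case (Suc m)
    have "(\<Sum>j\<in>{1..<Suc k}. (2::int) ^ (j - 1)) = (\<Sum>j\<in>{1..<k}. (2::int) ^ (j - 1)) + 2 ^ (k - 1)"
      by (rule sum.atLeastLessThan_Suc) (simp add: Suc)
    moreover have "(2::int) * 2 ^ (k - 1) = 2 ^ k" by (simp add: Suc)
    moreover have "(2::int) ^ Suc k = 2 * 2 ^ k" by (rule power_Suc)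
    ultimately show ?thesis using Suc.IH by linarith
  qed
qed

lemma read_err_low:
  assumes "S \<inter> {j. k \<le> j} = {}"
  shows "2 * \<bar>int (read_val n x S) - int (read_val n x {})\<bar> < 2 ^ k"
proof -
  have "(\<Sum>j\<in>{1..n}. if j \<in> S then 2 ^ (j - 1) else (0::int)) \<le> (\<Sum>j\<in>{1..<k}. if j \<in> S then 2 ^ (j - 1) else (0::int))"
  proof -
    have "(\<Sum>j\<in>{1..n}. if j \<in> S then 2 ^ (j - 1) else (0::int)) = (\<Sum>j\<in>{1..n} \<inter> S. 2 ^ (j - 1))"
      by (simp only: sum.inter_restrict[OF finite_atLeastAtMost])
    also have "\<dots> \<le> (\<Sum>j\<in>{1..<k} \<inter> S. 2 ^ (j - 1))"
      using assms by (intro sum_mono2) auto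
    also have "\<dots> = (\<Sum>j\<in>{1..<k}. if j \<in> S then 2 ^ (j - 1) else (0::int))"
      by (simp only: sum.inter_restrict[OF finite_atLeastLessThan])
    finally show ?thesis .
  qed
  also have "\<dots> \<le> (\<Sum>j\<in>{1..<k}. 2 ^ (j - 1))" by (rule sum_mono) auto
  finally have c: "(\<Sum>j\<in>{1..n}. if j \<in> S then 2 ^ (j - 1) else (0::int)) \<le> (\<Sum>j\<in>{1..<k}. 2 ^ (j - 1))" .
  have "\<bar>int (read_val n x S) - int (read_val n x {})\<bar> \<le> (\<Sum>j\<in>{1..<k}. 2 ^ (j - 1))"
    by (rule order_trans[OF read_err c])
  moreover have "\<And>a s p::int. a \<le> s \<Longrightarrow> 2 * s + 1 \<le> p \<Longrightarrow> 2 * a < p" by linarith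
  ultimately show ?thesis using E_bound[of k] by blast
qed


lemma flip_e_a: "flip_prob e_a j = (1/2::real) ^ j"
  by (simp add: flip_prob_def e_a_def powr_minus powr_realpow power_one_over inverse_eq_divide)

lemma pattern_e_a:
  "pattern_prob n e_a S = (\<Prod>j\<in>{1..n}. if j \<in> S then (1/2::real) ^ j else 1 - (1/2) ^ j)"
  unfolding pattern_prob_def flip_e_a by (rule refl)

lemma pattern_nonneg: "pattern_prob n e_a S \<ge> 0"
  unfolding pattern_e_a by (rule prod_nonneg) (auto simp: power_le_one)

lemma no_wrong:
  assumes "a < 2 ^ n" "b < 2 ^ n" "a < b" "2 ^ k \<le> b - a"
    and "S \<inter> {j. k \<le> j} = {}" "T \<inter> {j. k \<le> j} = {}"
  shows "\<not> wrong_order n a b S T"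
proof -
  have 1: "2 * \<bar>int (read_val n a S) - int a\<bar> < 2 ^ k"
    using read_err_low[OF assms(5), of n a] read_val_empty[OF assms(1)] by simp
  have 2: "2 * \<bar>int (read_val n b T) - int b\<bar> < 2 ^ k"
    using read_err_low[OF assms(6), of n b] read_val_empty[OF assms(2)] by simp
  have 3: "(2::int) ^ k \<le> int b - int a" using assms(3,4)
    by (metis of_nat_diff less_imp_le_nat of_nat_le_iff of_nat_numeral of_nat_power)
  have gen: "\<And>x y a b p::int. 2 * \<bar>x - a\<bar> < p \<Longrightarrow> 2 * \<bar>y - b\<bar> < p \<Longrightarrow> p \<le> b - a \<Longrightarrow> x < y"
    by arith
  have "int (read_val n a S) < int (read_val n b T)" using gen[OF 1 2 3] .
  then show ?thesis using assms(3) unfolding wrong_order_def by simp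
qed

lemma geom:
  "(\<Sum>j\<in>{1..n} \<inter> {j. k \<le> j}. (1/2::real) ^ j) < 2 * (1/2) ^ k"
proof (cases "k \<le> n")
  case True
  have "(\<Sum>j\<in>{1..n} \<inter> {j. k \<le> j}. (1/2::real) ^ j) \<le> (\<Sum>j\<in>{k..n}. (1/2) ^ j)"
    by (intro sum_mono2) auto
  also have "\<dots> = 2 * ((1/2) ^ k - (1/2) ^ Suc n)"
    using sum_gp_multiplied[OF True, of "1/2::real"] by simp
  also have "\<dots> < 2 * (1/2) ^ k" by simp
  finally show ?thesis .
next
  case False
  then have "{1..n} \<inter> {j. k \<le> j} = {}" by auto
  then show ?thesis by simp
qed

theorem lemma3:
  fixes n a b :: nat
  assumes "a < 2 ^ n" and "b < 2 ^ n" and "a < b"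
  shows "prob_I n a b e_a < 8 / (real b - real a)"
proof -
  have "\<exists>k. 2 ^ k \<le> b - a \<and> b - a < 2 ^ (k + 1)"
    using ex_power_ivl1[of 2 "b - a"] assms(3) by simp
  then obtain k where k: "2 ^ k \<le> b - a" "b - a < 2 ^ (k + 1)" by blast
  define H where "H = {j::nat. k \<le> j}"
  define HH where "HH = {1..n} \<inter> H"
  define P where "P S = pattern_prob n e_a S" for S
  define F where "F S = (if S \<inter> H \<noteq> {} then 1 else (0::real))" for S
  have Pnn: "P S \<ge> 0" for S unfolding P_def by (rule pattern_nonneg)
  have Psum: "(\<Sum>S\<in>Pow {1..n}. P S) = 1"
    unfolding P_def pattern_e_a by (rule total_prob) simp
  have Pmarg: "(\<Sum>S\<in>Pow {1..n}. if j \<in> S then P S else 0) = (1/2) ^ j" if "j \<in> {1..n}" for j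
    unfolding P_def pattern_e_a by (rule marginal) (use that in simp_all)
  have "prob_I n a b e_a \<le> (\<Sum>S\<in>Pow {1..n}. \<Sum>T\<in>Pow {1..n}. (F S + F T) * (P S * P T))"
    unfolding prob_I_def P_def[symmetric]
  proof (intro sum_mono)
    fix S T assume S: "S \<in> Pow {1..n}" and T: "T \<in> Pow {1..n}"
    have "0 \<le> P S * P T" using Pnn by simp
    moreover have "0 \<le> F S" "0 \<le> F T" by (auto simp: F_def)
    moreover have "wrong_order n a b S T \<Longrightarrow> 1 \<le> F S + F T"
      using no_wrong[OF assms k(1), of S T] by (auto simp: F_def H_def)
    ultimately show "(if wrong_order n a b S T then P S * P T else 0) \<le> (F S + F T) * (P S * P T)"
      by (auto simp: mult_le_cancel_right1 intro: mult_nonneg_nonneg)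
  qed
  also have "\<dots> = (\<Sum>S\<in>Pow {1..n}. F S * P S) * (\<Sum>T\<in>Pow {1..n}. P T)
      + (\<Sum>S\<in>Pow {1..n}. P S) * (\<Sum>T\<in>Pow {1..n}. F T * P T)"
  proof -
    have "(\<Sum>S\<in>Pow {1..n}. \<Sum>T\<in>Pow {1..n}. (F S + F T) * (P S * P T))
       = (\<Sum>S\<in>Pow {1..n}. \<Sum>T\<in>Pow {1..n}. (F S * P S) * P T + P S * (F T * P T))"
      by (intro sum.cong refl) (simp add: algebra_simps)
    also have "\<dots> = (\<Sum>S\<in>Pow {1..n}. \<Sum>T\<in>Pow {1..n}. (F S * P S) * P T)
       + (\<Sum>S\<in>Pow {1..n}. \<Sum>T\<in>Pow {1..n}. P S * (F T * P T))"
      by (simp only: sum.distrib)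
    finally show ?thesis by (simp only: sum_product)
  qed
  also have "\<dots> = 2 * (\<Sum>S\<in>Pow {1..n}. F S * P S)" using Psum by simp
  also have "(\<Sum>S\<in>Pow {1..n}. F S * P S) \<le> (\<Sum>S\<in>Pow {1..n}. \<Sum>j\<in>HH. if j \<in> S then P S else 0)"
  proof (rule sum_mono)
    fix S assume S: "S \<in> Pow {1..n}"
    show "F S * P S \<le> (\<Sum>j\<in>HH. if j \<in> S then P S else 0)"
    proof (cases "S \<inter> H = {}")
      case True then show ?thesis using Pnn by (simp add: F_def sum_nonneg)
    next
      case False
      then obtain j where j: "j \<in> S" "j \<in> H" by auto
      then have jH: "j \<in> HH" using S by (auto simp: HH_def)
      have "F S * P S = (if j \<in> S then P S else 0)" using j False by (simp add: F_def)
      also have "\<dots> \<le> (\<Sum>j\<in>HH. if j \<in> S then P S else 0)"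
        by (rule member_le_sum[OF jH]) (auto simp: Pnn HH_def)
      finally show ?thesis .
    qed
  qed
  also have "(\<Sum>S\<in>Pow {1..n}. \<Sum>j\<in>HH. if j \<in> S then P S else 0) = (\<Sum>j\<in>HH. (1/2::real) ^ j)"
    by (subst sum.swap) (rule sum.cong, simp, rule Pmarg, simp add: HH_def)
  also have "\<dots> < 2 * (1/2) ^ k" unfolding HH_def H_def by (rule geom)
  also have "2 * (2 * (1/2::real) ^ k) = 8 / 2 ^ (k + 1)"
    by (simp add: power_one_over)
  also have "\<dots> < 8 / (real b - real a)"
  proof -
    have "real b - real a = real (b - a)" using assms(3) by simp
    moreover have "real (b - a) < 2 ^ (k + 1)" using k(2)
      by (metis of_nat_less_iff of_nat_numeral of_nat_power)
    moreover have "0 < real (b - a)" using assms(3) by simp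
    ultimately have "real b - real a < 2 ^ (k + 1)" "0 < real b - real a" by simp_all
    then show ?thesis by (intro divide_strict_left_mono) auto
  qed
  finally show ?thesis by simp
qed

end
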